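(* Let $Q$ be an automorphic loop of nilpotency class $2$. Then $(ab,c,d)=(a,c,d)(b,c,d)$, $(a,bc,d)=(a,b,d)(a,c,d)$, and $(a,b,cd)=(a,b,c)(a,b,d)$ for every $a,b,c,d\in Q$.
   Context: A loop is a set with a binary operation such that all left and right translations $L_a:b\mapsto ab$, $R_a:b\mapsto ba$ are bijections and there is a two-sided identity $1$. The inner mapping group is the stabilizer of $1$ in the group generated by all translations; $Q$ is automorphic if all inner mappings are automorphisms. The associator $(a,b,c)$ is defined by $(ab)c=(a(bc))(a,b,c)$. The center $Z(Q)$ is the set of elements fixed by all inner mappings; $Z_0=1$, $Z_{i+1}(Q)$ is the preimage of $Z(Q/Z_i(Q))$, and $Q$ has nilpotency class $n$ if $Z_{n-1}(Q)\neq Q=Z_n(Q)$. *)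

theory Defs
  imports Main
begin

definition loop :: "'a set \<Rightarrow> ('a \<Rightarrow> 'a \<Rightarrow> 'a) \<Rightarrow> 'a \<Rightarrow> bool" where
  "loop Q m e \<longleftrightarrow> e \<in> Q \<and> (\<forall>x\<in>Q. \<forall>y\<in>Q. m x y \<in> Q)
     \<and> (\<forall>x\<in>Q. m e x = x \<and> m x e = x)
     \<and> (\<forall>a\<in>Q. bij_betw (m a) Q Q \<and> bij_betw (\<lambda>x. m x a) Q Q)"

text \<open>Translations, extended by the identity outside the carrier (so they are permutations of the type).\<close>

definition ltrans :: "'a set \<Rightarrow> ('a \<Rightarrow> 'a \<Rightarrow> 'a) \<Rightarrow> 'a \<Rightarrow> 'a \<Rightarrow> 'a" where
  "ltrans Q m a x = (if x \<in> Q then m a x else x)"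

definition rtrans :: "'a set \<Rightarrow> ('a \<Rightarrow> 'a \<Rightarrow> 'a) \<Rightarrow> 'a \<Rightarrow> 'a \<Rightarrow> 'a" where
  "rtrans Q m a x = (if x \<in> Q then m x a else x)"

inductive_set mlt :: "'a set \<Rightarrow> ('a \<Rightarrow> 'a \<Rightarrow> 'a) \<Rightarrow> ('a \<Rightarrow> 'a) set"
  for Q m where
  mlt_id: "id \<in> mlt Q m"
| mlt_L: "f \<in> mlt Q m \<Longrightarrow> a \<in> Q \<Longrightarrow> ltrans Q m a \<circ> f \<in> mlt Q m"
| mlt_R: "f \<in> mlt Q m \<Longrightarrow> a \<in> Q \<Longrightarrow> rtrans Q m a \<circ> f \<in> mlt Q m"
| mlt_Linv: "f \<in> mlt Q m \<Longrightarrow> a \<in> Q \<Longrightarrow> inv (ltrans Q m a) \<circ> f \<in> mlt Q m"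
| mlt_Rinv: "f \<in> mlt Q m \<Longrightarrow> a \<in> Q \<Longrightarrow> inv (rtrans Q m a) \<circ> f \<in> mlt Q m"

definition inn :: "'a set \<Rightarrow> ('a \<Rightarrow> 'a \<Rightarrow> 'a) \<Rightarrow> 'a \<Rightarrow> ('a \<Rightarrow> 'a) set" where
  "inn Q m e = {f \<in> mlt Q m. f e = e}"

definition automorphic :: "'a set \<Rightarrow> ('a \<Rightarrow> 'a \<Rightarrow> 'a) \<Rightarrow> 'a \<Rightarrow> bool" where
  "automorphic Q m e \<longleftrightarrow> loop Q m e \<and>
     (\<forall>f\<in>inn Q m e. \<forall>x\<in>Q. \<forall>y\<in>Q. f (m x y) = m (f x) (f y))"

definition center :: "'a set \<Rightarrow> ('a \<Rightarrow> 'a \<Rightarrow> 'a) \<Rightarrow> 'a \<Rightarrow> 'a set" where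
  "center Q m e = {x \<in> Q. \<forall>f\<in>inn Q m e. f x = x}"

text \<open>Quotient loop Q/N by a normal subloop N (cosets xN, with (xN)(yN) = (xy)N).\<close>

definition lcoset :: "('a \<Rightarrow> 'a \<Rightarrow> 'a) \<Rightarrow> 'a \<Rightarrow> 'a set \<Rightarrow> 'a set" where
  "lcoset m x N = m x ` N"

definition quot_carrier :: "'a set \<Rightarrow> ('a \<Rightarrow> 'a \<Rightarrow> 'a) \<Rightarrow> 'a set \<Rightarrow> 'a set set" where
  "quot_carrier Q m N = {lcoset m x N | x. x \<in> Q}"

definition quot_mult :: "'a set \<Rightarrow> ('a \<Rightarrow> 'a \<Rightarrow> 'a) \<Rightarrow> 'a set \<Rightarrow> 'a set \<Rightarrow> 'a set \<Rightarrow> 'a set" where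
  "quot_mult Q m N A B = lcoset m (m (SOME a. a \<in> Q \<and> A = lcoset m a N) (SOME b. b \<in> Q \<and> B = lcoset m b N)) N"

fun upper_center :: "'a set \<Rightarrow> ('a \<Rightarrow> 'a \<Rightarrow> 'a) \<Rightarrow> 'a \<Rightarrow> nat \<Rightarrow> 'a set" where
  "upper_center Q m e 0 = {e}"
| "upper_center Q m e (Suc i) =
     {x \<in> Q. lcoset m x (upper_center Q m e i)
        \<in> center (quot_carrier Q m (upper_center Q m e i)) (quot_mult Q m (upper_center Q m e i))
                 (upper_center Q m e i)}"

definition nilpotency_class :: "'a set \<Rightarrow> ('a \<Rightarrow> 'a \<Rightarrow> 'a) \<Rightarrow> 'a \<Rightarrow> nat \<Rightarrow> bool" where
  "nilpotency_class Q m e n \<longleftrightarrow> upper_center Q m e n = Q \<and> upper_center Q m e (n - 1) \<noteq> Q"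

definition ldiv :: "'a set \<Rightarrow> ('a \<Rightarrow> 'a \<Rightarrow> 'a) \<Rightarrow> 'a \<Rightarrow> 'a \<Rightarrow> 'a" where
  "ldiv Q m x y = (THE z. z \<in> Q \<and> m x z = y)"

definition associator :: "'a set \<Rightarrow> ('a \<Rightarrow> 'a \<Rightarrow> 'a) \<Rightarrow> 'a \<Rightarrow> 'a \<Rightarrow> 'a \<Rightarrow> 'a" where
  "associator Q m a b c = ldiv Q m (m a (m b c)) (m (m a b) c)"

end

theory Submission
  imports Defs
begin


definition cent :: "'a set \<Rightarrow> ('a \<Rightarrow> 'a \<Rightarrow> 'a) \<Rightarrow> 'a \<Rightarrow> bool" where
 "cent S mul u \<longleftrightarrow> u \<in> S \<and> (\<forall>x\<in>S. \<forall>y\<in>S. mul u x = mul x u \<and> mul (mul x y) u = mul x (mul y u)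
    \<and> mul (mul x u) y = mul x (mul u y) \<and> mul (mul u x) y = mul u (mul x y))"

locale lp =
  fixes S :: "'a set" and mul :: "'a \<Rightarrow> 'a \<Rightarrow> 'a" and E :: 'a
  assumes lp: "loop S mul E"
begin

lemma E_in: "E \<in> S" using lp unfolding loop_def by auto
lemma cl: "x\<in>S \<Longrightarrow> y\<in>S \<Longrightarrow> mul x y \<in> S" using lp unfolding loop_def by auto
lemma lid: "x\<in>S \<Longrightarrow> mul E x = x" using lp unfolding loop_def by auto
lemma rid: "x\<in>S \<Longrightarrow> mul x E = x" using lp unfolding loop_def by auto
lemma bl: "a\<in>S \<Longrightarrow> bij_betw (mul a) S S" using lp unfolding loop_def by auto
lemma br: "a\<in>S \<Longrightarrow> bij_betw (\<lambda>x. mul x a) S S" using lp unfolding loop_def by auto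

lemma linj: "a\<in>S \<Longrightarrow> x\<in>S \<Longrightarrow> y\<in>S \<Longrightarrow> mul a x = mul a y \<Longrightarrow> x = y"
  using bl unfolding bij_betw_def inj_on_def by blast
lemma rinj: "a\<in>S \<Longrightarrow> x\<in>S \<Longrightarrow> y\<in>S \<Longrightarrow> mul x a = mul y a \<Longrightarrow> x = y"
  using br unfolding bij_betw_def inj_on_def by blast
lemma lsurj: "a\<in>S \<Longrightarrow> y\<in>S \<Longrightarrow> \<exists>x\<in>S. mul a x = y"
  using bl[of a] unfolding bij_betw_def by (metis imageE)
lemma rsurj: "a\<in>S \<Longrightarrow> y\<in>S \<Longrightarrow> \<exists>x\<in>S. mul x a = y"
  using br[of a] unfolding bij_betw_def by (metis (no_types, lifting) imageE)

lemma inj_lt: "a\<in>S \<Longrightarrow> inj (ltrans S mul a)"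
  unfolding inj_def ltrans_def by (metis cl linj)
lemma inj_rt: "a\<in>S \<Longrightarrow> inj (rtrans S mul a)"
  unfolding inj_def rtrans_def by (metis cl rinj)

lemma inv_lt: "a\<in>S \<Longrightarrow> x\<in>S \<Longrightarrow> inv (ltrans S mul a) (mul a x) = x"
  using inv_f_f[OF inj_lt, of a x] by (simp add: ltrans_def)
lemma inv_rt: "a\<in>S \<Longrightarrow> x\<in>S \<Longrightarrow> inv (rtrans S mul a) (mul x a) = x"
  using inv_f_f[OF inj_rt, of a x] by (simp add: rtrans_def)

lemma mlt_pres: "f \<in> mlt S mul \<Longrightarrow> \<forall>x\<in>S. f x \<in> S"
proof (induction rule: mlt.induct)
  case mlt_id then show ?case by simp
next
  case (mlt_L f a) then show ?case by (simp add: ltrans_def cl)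
next
  case (mlt_R f a) then show ?case by (simp add: rtrans_def cl)
next
  case (mlt_Linv f a)
  show ?case
  proof
    fix x assume "x\<in>S" then have "f x\<in>S" using mlt_Linv by blast
    then obtain y where "y\<in>S" "mul a y = f x" using lsurj mlt_Linv by blast
    then show "(inv (ltrans S mul a) \<circ> f) x \<in> S" using inv_lt mlt_Linv by force
  qed
next
  case (mlt_Rinv f a)
  show ?case
  proof
    fix x assume "x\<in>S" then have "f x\<in>S" using mlt_Rinv by blast
    then obtain y where "y\<in>S" "mul y a = f x" using rsurj mlt_Rinv by blast
    then show "(inv (rtrans S mul a) \<circ> f) x \<in> S" using inv_rt mlt_Rinv by force
  qed
qed

lemma G:
  assumes U: "U \<in> S" "\<forall>f\<in>inn S mul E. f U = U" and X: "X\<in>S" "Y\<in>S"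
  shows "mul X U = mul U X" "mul X (mul Y U) = mul (mul X Y) U"
    "mul (mul U X) Y = mul U (mul X Y)"
proof -
  let ?f = "inv (ltrans S mul X) \<circ> (rtrans S mul X \<circ> id)"
  have "?f \<in> mlt S mul" by (intro mlt_Linv mlt_R mlt_id X)
  moreover have "?f E = E" using inv_lt[OF X(1) E_in] by (simp add: rtrans_def E_in X lid rid)
  ultimately have "?f U = U" using U(2) unfolding inn_def by blast
  then have 1: "inv (ltrans S mul X) (mul U X) = U" by (simp add: rtrans_def U)
  obtain V where V: "V\<in>S" "mul X V = mul U X" using lsurj[OF X(1) cl[OF U(1) X(1)]] by blast
  then show "mul X U = mul U X" using 1 inv_lt[OF X(1) V(1)] by simp
next
  let ?f = "inv (ltrans S mul (mul X Y)) \<circ> (ltrans S mul X \<circ> (ltrans S mul Y \<circ> id))"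
  have "?f \<in> mlt S mul" by (intro mlt_Linv mlt_L mlt_id X cl)
  moreover have "?f E = E" using inv_lt[OF cl[OF X] E_in] by (simp add: ltrans_def E_in X lid rid cl)
  ultimately have "?f U = U" using U(2) unfolding inn_def by blast
  then have 1: "inv (ltrans S mul (mul X Y)) (mul X (mul Y U)) = U" by (simp add: ltrans_def U X cl)
  obtain V where V: "V\<in>S" "mul (mul X Y) V = mul X (mul Y U)" using lsurj[OF cl[OF X] cl[OF X(1) cl[OF X(2) U(1)]]] by blast
  then show "mul X (mul Y U) = mul (mul X Y) U" using 1 inv_lt[OF cl[OF X] V(1)] by simp
next
  let ?f = "inv (rtrans S mul (mul X Y)) \<circ> (rtrans S mul Y \<circ> (rtrans S mul X \<circ> id))"
  have "?f \<in> mlt S mul" by (intro mlt_Rinv mlt_R mlt_id X cl)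
  moreover have "?f E = E" using inv_rt[OF cl[OF X] E_in] by (simp add: rtrans_def E_in X lid rid cl)
  ultimately have "?f U = U" using U(2) unfolding inn_def by blast
  then have 1: "inv (rtrans S mul (mul X Y)) (mul (mul U X) Y) = U" by (simp add: rtrans_def U X cl)
  obtain V where V: "V\<in>S" "mul V (mul X Y) = mul (mul U X) Y" using rsurj[OF cl[OF X] cl[OF cl[OF U(1) X(1)] X(2)]] by blast
  then show "mul (mul U X) Y = mul U (mul X Y)" using 1 inv_rt[OF cl[OF X] V(1)] by simp
qed

lemma center_cent: assumes "U \<in> center S mul E" shows "cent S mul U"
proof -
  have U: "U \<in> S" "\<forall>f\<in>inn S mul E. f U = U" using assms unfolding center_def by auto
  note g = G[OF U]
  show ?thesis unfolding cent_def
  proof (intro conjI ballI U(1))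
    fix x y assume xy: "x\<in>S" "y\<in>S"
    show "mul U x = mul x U" using g(1)[OF xy(1) xy(1)] by simp
    show "mul (mul x y) U = mul x (mul y U)" using g(2)[OF xy] by simp
    show "mul (mul U x) y = mul U (mul x y)" using g(3)[OF xy] by simp
    show "mul (mul x U) y = mul x (mul U y)"
      using g(1)[OF xy(1) xy(1)] g(1)[OF xy(2) xy(2)] g(1)[OF cl[OF xy] cl[OF xy]] g(2)[OF xy] g(3)[OF xy] by simp
  qed
qed

lemma H: assumes c: "cent S mul U" and f: "f \<in> mlt S mul" shows "\<forall>X\<in>S. f (mul X U) = mul (f X) U"
  using f
proof (induction rule: mlt.induct)
  case mlt_id then show ?case by simp
next
  case (mlt_L f a)
  have US: "U \<in> S" using c unfolding cent_def by auto
  show ?case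
  proof
    fix X assume X: "X\<in>S"
    then have fX: "f X \<in> S" using mlt_pres[OF mlt_L(1)] by blast
    have "(ltrans S mul a \<circ> f) (mul X U) = mul a (mul (f X) U)"
      using mlt_L X fX US by (simp add: ltrans_def cl)
    also have "\<dots> = mul (mul a (f X)) U" using c mlt_L(2) fX unfolding cent_def by auto
    finally show "(ltrans S mul a \<circ> f) (mul X U) = mul ((ltrans S mul a \<circ> f) X) U"
      using fX by (simp add: ltrans_def)
  qed
next
  case (mlt_R f a)
  have US: "U \<in> S" using c unfolding cent_def by auto
  show ?case
  proof
    fix X assume X: "X\<in>S"
    then have fX: "f X \<in> S" using mlt_pres[OF mlt_R(1)] by blast
    have "(rtrans S mul a \<circ> f) (mul X U) = mul (mul (f X) U) a"
      using mlt_R X fX US by (simp add: rtrans_def cl)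
    also have "\<dots> = mul (mul (f X) a) U" using c mlt_R(2) fX unfolding cent_def by metis
    finally show "(rtrans S mul a \<circ> f) (mul X U) = mul ((rtrans S mul a \<circ> f) X) U"
      using fX by (simp add: rtrans_def)
  qed
next
  case (mlt_Linv f a)
  have US: "U \<in> S" using c unfolding cent_def by auto
  show ?case
  proof
    fix X assume X: "X\<in>S"
    then have fX: "f X \<in> S" using mlt_pres[OF mlt_Linv(1)] by blast
    obtain Y where Y: "Y\<in>S" "mul a Y = f X" using lsurj[OF mlt_Linv(2) fX] by blast
    have "mul a (mul Y U) = mul (mul a Y) U" using c Y(1) mlt_Linv(2) unfolding cent_def by auto
    then have "mul a (mul Y U) = mul (f X) U" using Y(2) by simp
    then have "inv (ltrans S mul a) (mul (f X) U) = mul Y U"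
      using inv_lt[OF mlt_Linv(2) cl[OF Y(1) US]] by simp
    then show "(inv (ltrans S mul a) \<circ> f) (mul X U) = mul ((inv (ltrans S mul a) \<circ> f) X) U"
      using mlt_Linv X inv_lt[OF mlt_Linv(2) Y(1)] Y by simp
  qed
next
  case (mlt_Rinv f a)
  have US: "U \<in> S" using c unfolding cent_def by auto
  show ?case
  proof
    fix X assume X: "X\<in>S"
    then have fX: "f X \<in> S" using mlt_pres[OF mlt_Rinv(1)] by blast
    obtain Y where Y: "Y\<in>S" "mul Y a = f X" using rsurj[OF mlt_Rinv(2) fX] by blast
    have "mul (mul Y U) a = mul (f X) U" using c Y mlt_Rinv(2) unfolding cent_def by metis
    then have "inv (rtrans S mul a) (mul (f X) U) = mul Y U"
      using inv_rt[OF mlt_Rinv(2) cl[OF Y(1) US]] by simp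
    then show "(inv (rtrans S mul a) \<circ> f) (mul X U) = mul ((inv (rtrans S mul a) \<circ> f) X) U"
      using mlt_Rinv X inv_rt[OF mlt_Rinv(2) Y(1)] Y by simp
  qed
qed

lemma cent_center: assumes c: "cent S mul U" shows "U \<in> center S mul E"
proof -
  have US: "U \<in> S" using c unfolding cent_def by auto
  { fix f assume "f \<in> inn S mul E"
    then have f: "f \<in> mlt S mul" "f E = E" unfolding inn_def by auto
    have "f U = f (mul E U)" using lid US by simp
    also have "\<dots> = mul (f E) U" using H[OF c f(1)] E_in by blast
    also have "\<dots> = U" using f(2) lid US by simp
    finally have "f U = U" . }
  then show ?thesis unfolding center_def using US by auto
qed

end


locale qt = lp +
  fixes N :: "'a set"
  assumes NS: "N \<subseteq> S" and EN: "E \<in> N" and Ncent: "n\<in>N \<Longrightarrow> cent S mul n"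
   and Nmul: "n\<in>N \<Longrightarrow> k\<in>N \<Longrightarrow> mul n k \<in> N"
   and Ndiv: "n\<in>N \<Longrightarrow> k\<in>N \<Longrightarrow> \<exists>j\<in>N. mul n j = k"
begin

lemma c_assoc: "n\<in>N \<Longrightarrow> x\<in>S \<Longrightarrow> y\<in>S \<Longrightarrow> mul (mul x y) n = mul x (mul y n)"
  using Ncent unfolding cent_def by blast
lemma c_mid: "n\<in>N \<Longrightarrow> x\<in>S \<Longrightarrow> y\<in>S \<Longrightarrow> mul (mul x n) y = mul (mul x y) n"
  using Ncent unfolding cent_def by metis
lemma c_comm: "n\<in>N \<Longrightarrow> x\<in>S \<Longrightarrow> mul n x = mul x n"
  using Ncent unfolding cent_def by blast

lemma Q1: assumes "x\<in>S" "n\<in>N" shows "lcoset mul (mul x n) N = lcoset mul x N"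
proof
  show "lcoset mul (mul x n) N \<subseteq> lcoset mul x N"
  proof
    fix y assume "y \<in> lcoset mul (mul x n) N"
    then obtain k where k: "k\<in>N" "y = mul (mul x n) k" unfolding lcoset_def by auto
    then have "y = mul x (mul n k)" using c_assoc assms NS by auto
    then show "y \<in> lcoset mul x N" unfolding lcoset_def using Nmul k assms by auto
  qed
next
  show "lcoset mul x N \<subseteq> lcoset mul (mul x n) N"
  proof
    fix y assume "y \<in> lcoset mul x N"
    then obtain k where k: "k\<in>N" "y = mul x k" unfolding lcoset_def by auto
    obtain j where j: "j\<in>N" "mul n j = k" using Ndiv assms k by blast
    have e: "mul (mul x n) j = mul x (mul n j)" using c_assoc assms NS j by auto
    show "y \<in> lcoset mul (mul x n) N" unfolding lcoset_def using j k e by (metis image_eqI)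
  qed
qed

lemma Q2: "x\<in>S \<Longrightarrow> x \<in> lcoset mul x N"
  unfolding lcoset_def using EN rid by force

lemma Q3: assumes "x\<in>S" "y\<in>S" "lcoset mul x N = lcoset mul y N" shows "\<exists>n\<in>N. y = mul x n"
  using Q2[OF assms(2)] assms(3) unfolding lcoset_def by auto

lemma prod2: assumes "x\<in>S" "y\<in>S" "n1\<in>N" "n2\<in>N"
  shows "mul (mul x n1) (mul y n2) = mul (mul x y) (mul n2 n1)"
proof -
  have S: "n1\<in>S" "n2\<in>S" using assms NS by auto
  have "mul (mul x n1) (mul y n2) = mul (mul x (mul y n2)) n1" using c_mid assms cl S by blast
  also have "\<dots> = mul (mul (mul x y) n2) n1" using c_assoc assms by simp
  also have "\<dots> = mul (mul x y) (mul n2 n1)" using c_assoc[OF Nmul[OF assms(4,3)]] c_assoc assms cl S by simp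
  finally show ?thesis .
qed

lemma Q4: assumes "x\<in>S" "y\<in>S"
  shows "quot_mult S mul N (lcoset mul x N) (lcoset mul y N) = lcoset mul (mul x y) N"
proof -
  define a where "a = (SOME a. a \<in> S \<and> lcoset mul x N = lcoset mul a N)"
  define b where "b = (SOME b. b \<in> S \<and> lcoset mul y N = lcoset mul b N)"
  have a: "a \<in> S \<and> lcoset mul x N = lcoset mul a N" unfolding a_def
    by (rule someI[of _ x]) (simp add: assms)
  have b: "b \<in> S \<and> lcoset mul y N = lcoset mul b N" unfolding b_def
    by (rule someI[of _ y]) (simp add: assms)
  obtain n1 where n1: "n1\<in>N" "a = mul x n1" using Q3 a assms by blast
  obtain n2 where n2: "n2\<in>N" "b = mul y n2" using Q3 b assms by blast
  have "quot_mult S mul N (lcoset mul x N) (lcoset mul y N) = lcoset mul (mul a b) N"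
    unfolding quot_mult_def a_def b_def by simp
  also have "\<dots> = lcoset mul (mul (mul x y) (mul n2 n1)) N" using prod2[OF assms n1(1) n2(1)] n1 n2 by simp
  also have "\<dots> = lcoset mul (mul x y) N" using Q1 assms cl Nmul n1 n2 by simp
  finally show ?thesis .
qed

lemma qc: "quot_carrier S mul N = (\<lambda>x. lcoset mul x N) ` S"
  unfolding quot_carrier_def by auto

lemma NE: "N = lcoset mul E N"
  unfolding lcoset_def using lid NS by (auto simp: image_iff) (metis subsetD)

lemma Q5: "loop (quot_carrier S mul N) (quot_mult S mul N) N"
  unfolding loop_def qc
proof (intro conjI ballI)
  show "N \<in> (\<lambda>x. lcoset mul x N) ` S" using NE E_in by blast
next
  fix X Y assume "X \<in> (\<lambda>x. lcoset mul x N) ` S" "Y \<in> (\<lambda>x. lcoset mul x N) ` S"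
  then show "quot_mult S mul N X Y \<in> (\<lambda>x. lcoset mul x N) ` S" using Q4 cl by auto
next
  fix X assume "X \<in> (\<lambda>x. lcoset mul x N) ` S"
  then obtain x where x: "x\<in>S" "X = lcoset mul x N" by auto
  show "quot_mult S mul N N X = X" using Q4[OF E_in x(1)] NE x lid by simp
  show "quot_mult S mul N X N = X" using Q4[OF x(1) E_in] NE x rid by simp
next
  fix A assume "A \<in> (\<lambda>x. lcoset mul x N) ` S"
  then obtain a where a: "a\<in>S" "A = lcoset mul a N" by auto
  show "bij_betw (quot_mult S mul N A) ((\<lambda>x. lcoset mul x N) ` S) ((\<lambda>x. lcoset mul x N) ` S)"
    unfolding bij_betw_def
  proof
    show "inj_on (quot_mult S mul N A) ((\<lambda>x. lcoset mul x N) ` S)"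
    proof (rule inj_onI)
      fix X Y assume "X \<in> (\<lambda>x. lcoset mul x N) ` S" "Y \<in> (\<lambda>x. lcoset mul x N) ` S"
        "quot_mult S mul N A X = quot_mult S mul N A Y"
      then obtain x y where xy: "x\<in>S" "y\<in>S" "X = lcoset mul x N" "Y = lcoset mul y N"
        "lcoset mul (mul a x) N = lcoset mul (mul a y) N" using Q4 a by auto
      obtain n where n: "n\<in>N" "mul a y = mul (mul a x) n" using Q3 xy cl a by metis
      then have "mul a y = mul a (mul x n)" using c_assoc a xy by simp
      then have "y = mul x n" using linj a xy cl n NS by blast
      then show "X = Y" using Q1 xy n by simp
    qed
    show "quot_mult S mul N A ` (\<lambda>x. lcoset mul x N) ` S = (\<lambda>x. lcoset mul x N) ` S"
    proof
      show "quot_mult S mul N A ` (\<lambda>x. lcoset mul x N) ` S \<subseteq> (\<lambda>x. lcoset mul x N) ` S"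
        using Q4 a cl by auto
      show "(\<lambda>x. lcoset mul x N) ` S \<subseteq> quot_mult S mul N A ` (\<lambda>x. lcoset mul x N) ` S"
      proof
        fix Z assume "Z \<in> (\<lambda>x. lcoset mul x N) ` S"
        then obtain z where z: "z\<in>S" "Z = lcoset mul z N" by auto
        obtain x where x: "x\<in>S" "mul a x = z" using lsurj a z by blast
        show "Z \<in> quot_mult S mul N A ` (\<lambda>x. lcoset mul x N) ` S"
          using Q4[OF a(1) x(1)] x z a by auto
      qed
    qed
  qed
  show "bij_betw (\<lambda>X. quot_mult S mul N X A) ((\<lambda>x. lcoset mul x N) ` S) ((\<lambda>x. lcoset mul x N) ` S)"
    unfolding bij_betw_def
  proof
    show "inj_on (\<lambda>X. quot_mult S mul N X A) ((\<lambda>x. lcoset mul x N) ` S)"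
    proof (rule inj_onI)
      fix X Y assume "X \<in> (\<lambda>x. lcoset mul x N) ` S" "Y \<in> (\<lambda>x. lcoset mul x N) ` S"
        "quot_mult S mul N X A = quot_mult S mul N Y A"
      then obtain x y where xy: "x\<in>S" "y\<in>S" "X = lcoset mul x N" "Y = lcoset mul y N"
        "lcoset mul (mul x a) N = lcoset mul (mul y a) N" using Q4 a by auto
      obtain n where n: "n\<in>N" "mul y a = mul (mul x a) n" using Q3 xy cl a by metis
      then have "mul y a = mul (mul x n) a" using c_mid a xy by simp
      then have "y = mul x n" using rinj a xy cl n NS by blast
      then show "X = Y" using Q1 xy n by simp
    qed
    show "(\<lambda>X. quot_mult S mul N X A) ` (\<lambda>x. lcoset mul x N) ` S = (\<lambda>x. lcoset mul x N) ` S"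
    proof
      show "(\<lambda>X. quot_mult S mul N X A) ` (\<lambda>x. lcoset mul x N) ` S \<subseteq> (\<lambda>x. lcoset mul x N) ` S"
        using Q4 a cl by auto
      show "(\<lambda>x. lcoset mul x N) ` S \<subseteq> (\<lambda>X. quot_mult S mul N X A) ` (\<lambda>x. lcoset mul x N) ` S"
      proof
        fix Z assume "Z \<in> (\<lambda>x. lcoset mul x N) ` S"
        then obtain z where z: "z\<in>S" "Z = lcoset mul z N" by auto
        obtain x where x: "x\<in>S" "mul x a = z" using rsurj a z by blast
        show "Z \<in> (\<lambda>X. quot_mult S mul N X A) ` (\<lambda>x. lcoset mul x N) ` S"
          using Q4[OF x(1) a(1)] x z a by auto
      qed
    qed
  qed
qed

end


theorem proposition2p3:
  fixes Q :: "'a set" and m :: "'a \<Rightarrow> 'a \<Rightarrow> 'a" and e :: 'a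
  assumes "loop Q m e"
    and "automorphic Q m e"
    and "nilpotency_class Q m e 2"
  shows "\<forall>a\<in>Q. \<forall>b\<in>Q. \<forall>c\<in>Q. \<forall>d\<in>Q.
           associator Q m (m a b) c d = m (associator Q m a c d) (associator Q m b c d)
         \<and> associator Q m a (m b c) d = m (associator Q m a b d) (associator Q m a c d)
         \<and> associator Q m a b (m c d) = m (associator Q m a b c) (associator Q m a b d)"
proof -
  interpret L: lp Q m e using assms(1) by unfold_locales
  have autom: "\<And>f x y. f \<in> inn Q m e \<Longrightarrow> x\<in>Q \<Longrightarrow> y\<in>Q \<Longrightarrow> f (m x y) = m (f x) (f y)"
    using assms(2) unfolding automorphic_def by blast
  have innQ: "\<And>f x. f \<in> inn Q m e \<Longrightarrow> x\<in>Q \<Longrightarrow> f x \<in> Q" using L.mlt_pres unfolding inn_def by blast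
  have cQ: "\<And>x. cent Q m x \<Longrightarrow> x \<in> Q" unfolding cent_def by blast
  have cfix: "\<And>f x. f \<in> inn Q m e \<Longrightarrow> cent Q m x \<Longrightarrow> f x = x"
    using L.cent_center unfolding center_def by blast
  have Cmul: "cent Q m (m x y)" if c: "cent Q m x" "cent Q m y" for x y
  proof -
    have "m x y \<in> center Q m e" unfolding center_def
    proof (intro CollectI conjI ballI)
      show "m x y \<in> Q" using c cQ L.cl by blast
      fix f assume f: "f \<in> inn Q m e"
      show "f (m x y) = m x y" using autom[OF f cQ[OF c(1)] cQ[OF c(2)]] cfix[OF f c(1)] cfix[OF f c(2)] by simp
    qed
    then show ?thesis by (rule L.center_cent)
  qed
  have Cdiv: "\<exists>j. cent Q m j \<and> m n j = k" if c: "cent Q m n" "cent Q m k" for n k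
  proof -
    obtain j where j: "j\<in>Q" "m n j = k" using L.lsurj cQ c by blast
    have "j \<in> center Q m e" unfolding center_def
    proof (intro CollectI conjI ballI j(1))
      fix f assume f: "f \<in> inn Q m e"
      have "m n (f j) = f (m n j)" using autom[OF f cQ[OF c(1)] j(1)] cfix[OF f c(1)] by simp
      also have "\<dots> = m n j" using j cfix[OF f c(2)] by simp
      finally show "f j = j" using L.linj cQ c innQ f j by blast
    qed
    then show ?thesis using L.center_cent j by blast
  qed
  have ce: "cent Q m e" unfolding cent_def using L.E_in L.lid L.rid L.cl by auto
  interpret q0: qt Q m e "{e}"
    by unfold_locales (auto simp: L.E_in ce L.lid)
  interpret Q0: lp "quot_carrier Q m {e}" "quot_mult Q m {e}" "{e}" using q0.Q5 by unfold_locales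
  have lc0: "\<And>x. x\<in>Q \<Longrightarrow> lcoset m x {e} = {x}" by (simp add: lcoset_def L.rid)
  have qc0: "quot_carrier Q m {e} = (\<lambda>x. {x}) ` Q" using q0.qc lc0 by auto
  have qm0: "\<And>x y. x\<in>Q \<Longrightarrow> y\<in>Q \<Longrightarrow> quot_mult Q m {e} {x} {y} = {m x y}"
    using q0.Q4 lc0 L.cl by metis
  have centeq: "cent (quot_carrier Q m {e}) (quot_mult Q m {e}) {x} = cent Q m x" if "x\<in>Q" for x
    unfolding cent_def qc0 using that by (auto simp: qm0 L.cl)
  define Z where "Z = {x\<in>Q. cent Q m x}"
  have Z1: "upper_center Q m e (Suc 0) = Z"
  proof -
    have "upper_center Q m e (Suc 0) = {x\<in>Q. lcoset m x {e} \<in> center (quot_carrier Q m {e}) (quot_mult Q m {e}) {e}}" by simp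
    also have "\<dots> = Z" unfolding Z_def
    proof (rule Collect_cong)
      fix x
      show "(x \<in> Q \<and> lcoset m x {e} \<in> center (quot_carrier Q m {e}) (quot_mult Q m {e}) {e}) =
            (x \<in> Q \<and> cent Q m x)"
        using lc0 centeq Q0.center_cent Q0.cent_center by metis
    qed
    finally show ?thesis .
  qed
  interpret q1: qt Q m e Z
  proof (unfold_locales)
    fix n k assume "n \<in> Z" "k \<in> Z"
    then obtain j where "cent Q m j" "m n j = k" using Cdiv unfolding Z_def by blast
    then show "\<exists>j\<in>Z. m n j = k" using cQ unfolding Z_def by blast
  qed (auto simp: Z_def ce L.E_in Cmul L.cl cQ)
  interpret Q1: lp "quot_carrier Q m Z" "quot_mult Q m Z" Z using q1.Q5 by unfold_locales
  have Z2: "upper_center Q m e (Suc (Suc 0)) = Q"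
    using assms(3) unfolding nilpotency_class_def by (simp add: numeral_2_eq_2)
  have AS: "associator Q m a b c \<in> Z \<and> m (m a (m b c)) (associator Q m a b c) = m (m a b) c"
    if abc: "a\<in>Q" "b\<in>Q" "c\<in>Q" for a b c
  proof -
    have "lcoset m c Z \<in> center (quot_carrier Q m Z) (quot_mult Q m Z) Z"
    proof -
      have "upper_center Q m e (Suc (Suc 0)) = {x\<in>Q. lcoset m x Z \<in> center (quot_carrier Q m Z) (quot_mult Q m Z) Z}"
        by (subst upper_center.simps(2)) (simp only: Z1)
      then show ?thesis using Z2 abc by blast
    qed
    then have U: "lcoset m c Z \<in> quot_carrier Q m Z"
      "\<forall>f\<in>inn (quot_carrier Q m Z) (quot_mult Q m Z) Z. f (lcoset m c Z) = lcoset m c Z"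
      unfolding center_def by auto
    have "quot_mult Q m Z (lcoset m a Z) (quot_mult Q m Z (lcoset m b Z) (lcoset m c Z)) =
      quot_mult Q m Z (quot_mult Q m Z (lcoset m a Z) (lcoset m b Z)) (lcoset m c Z)"
      by (rule Q1.G(2)[OF U]) (auto simp: q1.qc abc)
    then have "lcoset m (m a (m b c)) Z = lcoset m (m (m a b) c) Z" by (simp add: q1.Q4 abc L.cl)
    then obtain n where n: "n\<in>Z" "m (m a b) c = m (m a (m b c)) n" using q1.Q3 abc L.cl by metis
    have "associator Q m a b c = n" unfolding associator_def ldiv_def
    proof (rule the_equality)
      show "n \<in> Q \<and> m (m a (m b c)) n = m (m a b) c" using n Z_def by auto
      fix z assume "z \<in> Q \<and> m (m a (m b c)) z = m (m a b) c"
      then show "z = n" using n L.linj[of "m a (m b c)" z n] abc L.cl Z_def by auto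
    qed
    then show ?thesis using n by simp
  qed

  define A where "A = associator Q m"
  have Ain: "\<And>a b c. a\<in>Q \<Longrightarrow> b\<in>Q \<Longrightarrow> c\<in>Q \<Longrightarrow> A a b c \<in> Z" using AS A_def by blast
  have Aeq: "\<And>a b c. a\<in>Q \<Longrightarrow> b\<in>Q \<Longrightarrow> c\<in>Q \<Longrightarrow> m (m a b) c = m (m a (m b c)) (A a b c)"
    using AS A_def by metis
  have ZQ: "\<And>n. n \<in> Z \<Longrightarrow> n \<in> Q" unfolding Z_def by blast
  have Zm: "\<And>n k. n \<in> Z \<Longrightarrow> k \<in> Z \<Longrightarrow> m n k \<in> Z" by (rule q1.Nmul)
  note cl = L.cl
  have F1: "A (m a b) c d = m (A a c d) (A b c d)" if q: "a\<in>Q" "b\<in>Q" "c\<in>Q" "d\<in>Q" for a b c d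
  proof -
    let ?f = "inv (rtrans Q m (m c d)) \<circ> (rtrans Q m d \<circ> (rtrans Q m c \<circ> id))"
    have "?f \<in> mlt Q m" by (intro mlt_Rinv mlt_R mlt_id q cl)
    moreover have "?f e = e" using L.inv_rt[OF cl[OF q(3,4)] L.E_in]
      by (simp add: rtrans_def L.E_in q L.lid cl)
    ultimately have f: "?f \<in> inn Q m e" unfolding inn_def by blast
    have fx: "?f x = m x (A x c d)" if x: "x\<in>Q" for x
    proof -
      have "?f x = inv (rtrans Q m (m c d)) (m (m x c) d)" by (simp add: rtrans_def x q cl)
      also have "m (m x c) d = m (m x (A x c d)) (m c d)"
        using Aeq[OF x q(3,4)] q1.c_mid[OF Ain[OF x q(3,4)] x cl[OF q(3,4)]] by simp
      also have "inv (rtrans Q m (m c d)) \<dots> = m x (A x c d)"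
        by (rule L.inv_rt) (use x q cl ZQ Ain in auto)
      finally show ?thesis .
    qed
    have "m (m a b) (A (m a b) c d) = m (m a (A a c d)) (m b (A b c d))"
      using autom[OF f q(1,2)] fx q cl by simp
    also have "\<dots> = m (m a b) (m (A b c d) (A a c d))"
      by (rule q1.prod2) (use q Ain in auto)
    finally have "A (m a b) c d = m (A b c d) (A a c d)"
      using L.linj[OF cl[OF q(1,2)] ZQ[OF Ain[OF cl[OF q(1,2)] q(3,4)]] ZQ[OF Zm[OF Ain[OF q(2,3,4)] Ain[OF q(1,3,4)]]]] by blast
    then show ?thesis using q1.c_comm[OF Ain[OF q(2,3,4)] ZQ[OF Ain[OF q(1,3,4)]]] by simp
  qed
  have F3: "A a b (m c d) = m (A a b c) (A a b d)" if q: "a\<in>Q" "b\<in>Q" "c\<in>Q" "d\<in>Q" for a b c d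
  proof -
    let ?g = "inv (ltrans Q m (m a b)) \<circ> (ltrans Q m a \<circ> (ltrans Q m b \<circ> id))"
    have "?g \<in> mlt Q m" by (intro mlt_Linv mlt_L mlt_id q cl)
    moreover have "?g e = e" using L.inv_lt[OF cl[OF q(1,2)] L.E_in]
      by (simp add: ltrans_def L.E_in q L.rid cl)
    ultimately have g: "?g \<in> inn Q m e" unfolding inn_def by blast
    have gx: "?g x \<in> Q \<and> x = m (?g x) (A a b x)" if x: "x\<in>Q" for x
    proof -
      obtain x' where x': "x'\<in>Q" "m (m a b) x' = m a (m b x)" using L.lsurj[OF cl[OF q(1,2)] cl[OF q(1) cl[OF q(2) x]]] by blast
      have "?g x = inv (ltrans Q m (m a b)) (m a (m b x))" by (simp add: ltrans_def x q cl)
      also have "\<dots> = x'" using x' L.inv_lt[OF cl[OF q(1,2)] x'(1)] by simp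
      finally have gx: "?g x = x'" .
      have "m (m a b) x = m (m (m a b) x') (A a b x)" using Aeq[OF q(1,2) x] x' by simp
      also have "\<dots> = m (m a b) (m x' (A a b x))" by (rule q1.c_assoc[OF Ain[OF q(1,2) x] cl[OF q(1,2)] x'(1)])
      finally have "x = m x' (A a b x)"
        using L.linj[OF cl[OF q(1,2)] x cl[OF x'(1) ZQ[OF Ain[OF q(1,2) x]]]] by blast
      then show ?thesis using gx x' by blast
    qed
    have gc: "?g c \<in> Q" "c = m (?g c) (A a b c)" using gx[OF q(3)] by blast+
    have gd: "?g d \<in> Q" "d = m (?g d) (A a b d)" using gx[OF q(4)] by blast+
    have gcd: "?g (m c d) \<in> Q" "m c d = m (?g (m c d)) (A a b (m c d))" using gx[OF cl[OF q(3,4)]] by blast+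
    have gm: "?g (m c d) = m (?g c) (?g d)" using autom[OF g q(3,4)] .
    have "m (?g (m c d)) (A a b (m c d)) = m c d" by (rule sym[OF gcd(2)])
    also have "\<dots> = m (m (?g c) (A a b c)) (m (?g d) (A a b d))"
      by (rule arg_cong2[OF gc(2) gd(2), of m])
    also have "\<dots> = m (m (?g c) (?g d)) (m (A a b d) (A a b c))"
      by (rule q1.prod2) (use q Ain gc gd in auto)
    finally have "m (?g (m c d)) (A a b (m c d)) = m (?g (m c d)) (m (A a b d) (A a b c))"
      using gm by simp
    then have "A a b (m c d) = m (A a b d) (A a b c)"
      using L.linj[OF gcd(1) ZQ[OF Ain[OF q(1,2) cl[OF q(3,4)]]] ZQ[OF Zm[OF Ain[OF q(1,2,4)] Ain[OF q(1,2,3)]]]] by blast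
    then show ?thesis using q1.c_comm[OF Ain[OF q(1,2,4)] ZQ[OF Ain[OF q(1,2,3)]]] by simp
  qed
  have F2: "A a (m b c) d = m (A a b d) (A a c d)" if q: "a\<in>Q" "b\<in>Q" "c\<in>Q" "d\<in>Q" for a b c d
  proof -
    define n1 where "n1 = A a b c"
    define n2 where "n2 = A a (m b c) d"
    define n3 where "n3 = A b c d"
    define n4 where "n4 = A (m a b) c d"
    define n5 where "n5 = A a b (m c d)"
    define x where "x = A a b d"
    define y where "y = A a c d"
    define P where "P = m a (m b (m c d))"
    have Z: "n1 \<in> Z" "n2 \<in> Z" "n3 \<in> Z" "n4 \<in> Z" "n5 \<in> Z" "x \<in> Z" "y \<in> Z"
      unfolding n1_def n2_def n3_def n4_def n5_def x_def y_def using Ain q cl by auto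
    have ZQ': "n1 \<in> Q" "n2 \<in> Q" "n3 \<in> Q" "n4 \<in> Q" "n5 \<in> Q" "x \<in> Q" "y \<in> Q" using Z ZQ by auto
    have PQ: "P \<in> Q" unfolding P_def using q cl by auto
    have "m (m (m a b) c) d = m (m (m a (m b c)) n1) d" using Aeq q n1_def by simp
    also have "\<dots> = m (m (m a (m b c)) d) n1" using q1.c_mid Z q cl by simp
    also have "m (m a (m b c)) d = m (m a (m (m b c) d)) n2" using Aeq q n2_def cl by simp
    also have "m (m b c) d = m (m b (m c d)) n3" using Aeq q n3_def by simp
    also have "m a (m (m b (m c d)) n3) = m P n3" unfolding P_def using q1.c_assoc Z q cl by simp
    finally have h1: "m (m (m a b) c) d = m (m (m P n3) n2) n1" .
    have "m (m (m a b) c) d = m (m (m a b) (m c d)) n4" unfolding n4_def by (rule Aeq[OF cl[OF q(1,2)] q(3,4)])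
    also have "m (m a b) (m c d) = m P n5" unfolding P_def using Aeq q n5_def cl by simp
    finally have h2: "m (m (m a b) c) d = m (m P n5) n4" .
    have "m (m (m P n3) n2) n1 = m P (m (m n3 n2) n1)"
      using q1.c_assoc Z ZQ' PQ cl Zm by simp
    moreover have "m (m P n5) n4 = m P (m n5 n4)" using q1.c_assoc Z ZQ' PQ by simp
    ultimately have "m P (m (m n3 n2) n1) = m P (m n5 n4)" using h1 h2 by simp
    then have e1: "m (m n3 n2) n1 = m n5 n4" using L.linj PQ ZQ' cl by meson
    have n4e: "n4 = m y n3" unfolding n4_def y_def n3_def using F1 q by simp
    have n5e: "n5 = m n1 x" unfolding n5_def n1_def x_def using F3 q by simp
    have "m (m n3 n2) n1 = m (m n2 n1) n3"
      using q1.c_assoc[OF Z(1) ZQ'(3) ZQ'(2)] q1.c_comm[OF Z(3) cl[OF ZQ'(2) ZQ'(1)]] by simp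
    moreover have "m n5 n4 = m (m (m n1 x) y) n3"
      using n4e n5e q1.c_assoc[OF Z(3) cl[OF ZQ'(1) ZQ'(6)] ZQ'(7)] by simp
    ultimately have "m (m n2 n1) n3 = m (m (m n1 x) y) n3" using e1 by simp
    then have "m n2 n1 = m (m n1 x) y" using L.rinj ZQ' cl by meson
    also have "\<dots> = m (m x y) n1"
      using q1.c_assoc[OF Z(7) ZQ'(1) ZQ'(6)] q1.c_comm[OF Z(1) cl[OF ZQ'(6) ZQ'(7)]] by simp
    finally have "n2 = m x y" using L.rinj ZQ' cl by meson
    then show ?thesis unfolding n2_def x_def y_def .
  qed
  show ?thesis using F1 F2 F3 unfolding A_def by blast
qed


end
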